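(* Let $\mathcal{X}$ be a Polish space with a complete consistent metric $d$, let $\Theta$ be a Polish space, let $\mathcal{P}\colon\Theta\to\mathcal{M}(\mathcal{X})$ be measurable with image $\mathcal{A}_0:=\mathcal{P}(\Theta)$, assume $\mathcal{P}$ is positive in the sense that $\mu(B_\delta(x))>0$ for all $\mu\in\mathcal{A}_0$, $x\in\mathcal{X}$, $\delta>0$, let $\pi_\Theta\in\mathcal{M}(\Theta)$, $\pi_0:=\mathcal{P}\pi_\Theta\in\mathcal{M}(\mathcal{A}_0)$, and let $\Phi_0\colon\mathcal{M}(\mathcal{X})\to\mathbb{R}$ be measurable and semibounded. For $\alpha>0$ let $\Pi_\alpha$ be as in the context. If \[\lim_{\delta\downarrow0}\sup_{x\in\mathcal{X}}\sup_{\theta\in\Theta}\mathcal{P}(\theta)[B_\delta(x)]=0,\] then for every $\alpha>0$ there exists $\delta_c(\alpha)>0$ such that for all $0<\delta<\delta_c(\alpha)$, all $n\in\mathbb{N}$ and all $(x_1,\dots,x_n)\in\mathcal{X}^n$, \[\mathcal{U}(\Pi_\alpha\,|\,B^n_\delta)\ge\operatorname{ess\,sup}_{\pi_0}(\Phi_0)\quad\text{and}\quad\mathcal{L}(\Pi_\alpha\,|\,B^n_\delta)\le\operatorname{ess\,inf}_{\pi_0}(\Phi_0).\]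
   Context: $\mathcal{M}(\mathcal{X})$ is the set of Borel probability measures on $\mathcal{X}$ with the weak topology, metrized by the Prokhorov metric $d_{\mathcal{M}}(\mu_1,\mu_2):=\inf\{\varepsilon>0:\mu_1(A)\le\mu_2(A^\varepsilon)+\varepsilon\ \forall A\in\mathcal{B}(\mathcal{X})\}$, where $A^\varepsilon=\{x:d(x,x')<\varepsilon\text{ for some }x'\in A\}$. $B_\delta(x)$ is the open $d$-ball of radius $\delta$ about $x$, and $B_\alpha(\mu)$ the open Prokhorov ball. $\mathcal{P}\pi_\Theta$ is the pushforward. Let $\mathcal{A}_\alpha:=\bigcup_{\mu\in\mathcal{A}_0}B_\alpha(\mu)$, $\mathcal{A}:=\{(\mu_1,\mu_2)\in\mathcal{M}(\mathcal{X})^2:\mu_1\in\mathcal{A}_0,\ d_{\mathcal{M}}(\mu_1,\mu_2)<\alpha\}$, with projections $P_0(\mu_1,\mu_2)=\mu_1$, $P_\alpha(\mu_1,\mu_2)=\mu_2$, and $\Pi_\alpha:=\{\pi_\alpha\in\mathcal{M}(\mathcal{A}_\alpha):\exists\pi\in\mathcal{M}(\mathcal{A})\text{ with }P_0\pi=\pi_0,\ P_\alpha\pi=\pi_\alpha\}$. Data: $B^n_\delta:=\prod_{i=1}^nB_\delta(x_i)$ and the data map $\mu\mapsto\mu^n$ (n-fold product). For $\pi\in\mathcal{M}(\mathcal{A}_\alpha)$ with $\mathbb{E}_{\mu\sim\pi}[\mu^n(B^n_\delta)]>0$, the posterior value is $\mathbb{E}_{\mu\sim\pi}[\Phi_0(\mu)\mu^n(B^n_\delta)]/\mathbb{E}_{\mu\sim\pi}[\mu^n(B^n_\delta)]$;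 $\mathcal{U}(\Pi_\alpha|B^n_\delta)$ (resp. $\mathcal{L}$) is the supremum (resp. infimum) of the posterior value over $\pi\in\Pi_\alpha$ with $\mathbb{E}_{\mu\sim\pi}[\mu^n(B^n_\delta)]>0$ ($\sup\varnothing=-\infty$, $\inf\varnothing=+\infty$). $\operatorname{ess\,sup}_{\pi_0}(\Phi_0):=\inf\{r\in\mathbb{R}:\pi_0[\Phi_0>r]=0\}$ and $\operatorname{ess\,inf}_{\pi_0}(\Phi_0):=\sup\{r\in\mathbb{R}:\pi_0[\Phi_0<r]=0\}$. *)

theory Defs
  imports "HOL-Probability.Probability"
begin

text \<open>The space M(X) of Borel probability measures on X, as a measurable space:
  the Giry-monad algebra (sigma-algebra generated by the evaluation maps, which for a
  Polish X is the Borel sigma-algebra of the weak topology / Prokhorov metric).\<close>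
abbreviation MX :: "'a::topological_space measure measure" where
  "MX \<equiv> prob_algebra borel"

definition enlarge :: "'a::metric_space set \<Rightarrow> real \<Rightarrow> 'a set" where
  "enlarge A \<epsilon> = {x. \<exists>x'\<in>A. dist x x' < \<epsilon>}"

definition prokhorov :: "'a::metric_space measure \<Rightarrow> 'a measure \<Rightarrow> real" where
  "prokhorov \<mu>1 \<mu>2 = Inf {\<epsilon>. \<epsilon> > 0 \<and>
      (\<forall>A\<in>sets borel. measure \<mu>1 A \<le> measure \<mu>2 (enlarge A \<epsilon>) + \<epsilon>)}"

definition A_alpha :: "'a::metric_space measure set \<Rightarrow> real \<Rightarrow> 'a measure set" where
  "A_alpha A0 \<alpha> = (\<Union>\<mu>\<in>A0. {\<nu> \<in> space MX. prokhorov \<mu> \<nu> < \<alpha>})"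

definition A_rel :: "'a::metric_space measure set \<Rightarrow> real \<Rightarrow> ('a measure \<times> 'a measure) set" where
  "A_rel A0 \<alpha> = {(\<mu>1, \<mu>2). \<mu>1 \<in> A0 \<and> \<mu>2 \<in> space MX \<and> prokhorov \<mu>1 \<mu>2 < \<alpha>}"

definition Pi_alpha :: "'a::metric_space measure set \<Rightarrow> 'a measure measure \<Rightarrow> real
     \<Rightarrow> 'a measure measure set" where
  "Pi_alpha A0 \<pi>0 \<alpha> =
     {\<pi>\<alpha> \<in> space (prob_algebra (restrict_space MX (A_alpha A0 \<alpha>))).
        \<exists>\<pi> \<in> space (prob_algebra (restrict_space (MX \<Otimes>\<^sub>M MX) (A_rel A0 \<alpha>))).
           distr \<pi> (restrict_space MX A0) fst = \<pi>0 \<and>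
           distr \<pi> (restrict_space MX (A_alpha A0 \<alpha>)) snd = \<pi>\<alpha>}"

text \<open>mu^n(B^n_delta) for data x_0,...,x_{n-1}.\<close>
definition data_lik :: "nat \<Rightarrow> (nat \<Rightarrow> 'a::metric_space) \<Rightarrow> real \<Rightarrow> 'a measure \<Rightarrow> real" where
  "data_lik n x \<delta> \<mu> =
     measure (PiM {..<n} (\<lambda>_. \<mu>)) (PiE {..<n} (\<lambda>i. ball (x i) \<delta>))"

definition ext_integral :: "'b measure \<Rightarrow> ('b \<Rightarrow> real) \<Rightarrow> ereal" where
  "ext_integral M f =
     enn2ereal (\<integral>\<^sup>+ y. ennreal (f y) \<partial>M) - enn2ereal (\<integral>\<^sup>+ y. ennreal (- f y) \<partial>M)"

definition post_value :: "('a::metric_space measure \<Rightarrow> real) \<Rightarrow> nat \<Rightarrow> (nat \<Rightarrow> 'a) \<Rightarrow> real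
     \<Rightarrow> 'a measure measure \<Rightarrow> ereal" where
  "post_value \<Phi> n x \<delta> \<pi> =
     ext_integral \<pi> (\<lambda>\<mu>. \<Phi> \<mu> * data_lik n x \<delta> \<mu>) / ereal (integral\<^sup>L \<pi> (data_lik n x \<delta>))"

definition upper_post :: "('a::metric_space measure \<Rightarrow> real) \<Rightarrow> 'a measure measure set
     \<Rightarrow> nat \<Rightarrow> (nat \<Rightarrow> 'a) \<Rightarrow> real \<Rightarrow> ereal" where
  "upper_post \<Phi> PP n x \<delta> =
     Sup {post_value \<Phi> n x \<delta> \<pi> | \<pi>. \<pi> \<in> PP \<and> integral\<^sup>L \<pi> (data_lik n x \<delta>) > 0}"

definition lower_post :: "('a::metric_space measure \<Rightarrow> real) \<Rightarrow> 'a measure measure set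
     \<Rightarrow> nat \<Rightarrow> (nat \<Rightarrow> 'a) \<Rightarrow> real \<Rightarrow> ereal" where
  "lower_post \<Phi> PP n x \<delta> =
     Inf {post_value \<Phi> n x \<delta> \<pi> | \<pi>. \<pi> \<in> PP \<and> integral\<^sup>L \<pi> (data_lik n x \<delta>) > 0}"

definition ess_sup :: "'b measure \<Rightarrow> ('b \<Rightarrow> real) \<Rightarrow> ereal" where
  "ess_sup M f = Inf (ereal ` {r. emeasure M {y \<in> space M. f y > r} = 0})"

definition ess_inf :: "'b measure \<Rightarrow> ('b \<Rightarrow> real) \<Rightarrow> ereal" where
  "ess_inf M f = Sup (ereal ` {r. emeasure M {y \<in> space M. f y < r} = 0})"

end

theory Submission
  imports Defs
begin


lemma data_lik_eq:
  assumes "prob_space \<mu>" "sets \<mu> = sets (borel :: 'a::metric_space measure)"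
  shows "data_lik n x \<delta> \<mu> = (\<Prod>i<n. measure \<mu> (ball (x i) \<delta>))"
proof -
  interpret product_sigma_finite "\<lambda>_::nat. \<mu>"
    unfolding product_sigma_finite_def using assms(1)
    by (simp add: prob_space_imp_sigma_finite)
  have "emeasure (PiM {..<n} (\<lambda>_. \<mu>)) (PiE {..<n} (\<lambda>i. ball (x i) \<delta>))
      = (\<Prod>i<n. emeasure \<mu> (ball (x i) \<delta>))"
    by (rule emeasure_PiM) (auto simp: assms(2))
  also have "\<dots> = (\<Prod>i<n. ennreal (measure \<mu> (ball (x i) \<delta>)))"
  proof -
    interpret p: prob_space \<mu> by fact
    show ?thesis by (simp add: p.emeasure_eq_measure)
  qed
  also have "\<dots> = ennreal (\<Prod>i<n. measure \<mu> (ball (x i) \<delta>))"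
    by (simp add: prod_ennreal)
  finally show ?thesis unfolding data_lik_def measure_def
    by (simp add: prod_nonneg)
qed

lemma data_lik_meas: "data_lik n x \<delta> \<in> borel_measurable (MX :: 'a::metric_space measure measure)"
proof -
  have "(\<lambda>\<mu>. \<Prod>i<n. measure \<mu> (ball (x i) \<delta>)) \<in> borel_measurable (MX :: 'a measure measure)"
    by measurable
  then show ?thesis
    by (rule measurable_cong[THEN iffD1, rotated])
       (auto simp: space_prob_algebra data_lik_eq)
qed

lemma data_lik_bounds:
  assumes "prob_space \<mu>" "sets \<mu> = sets (borel :: 'a::metric_space measure)"
  shows "0 \<le> data_lik n x \<delta> \<mu> \<and> data_lik n x \<delta> \<mu> \<le> 1"
  using assms by (auto simp: data_lik_eq prod_nonneg intro!: prod_le_1 prob_space.prob_le_1)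

lemma enlarge_sets: "enlarge A \<epsilon> \<in> sets (borel :: 'a::metric_space measure)"
proof -
  have "enlarge A \<epsilon> = (\<Union>x'\<in>A. ball x' \<epsilon>)"
    by (auto simp: enlarge_def dist_commute)
  then have "open (enlarge A \<epsilon>)" by auto
  then show ?thesis by auto
qed

lemma enlarge_sub: "\<epsilon> > 0 \<Longrightarrow> A \<subseteq> enlarge A \<epsilon>"
proof
  fix z assume "\<epsilon> > 0" "z \<in> A"
  then show "z \<in> enlarge A \<epsilon>" unfolding enlarge_def by (auto intro!: bexI[of _ z])
qed

lemma prokhorov_lessI:
  assumes "0 < \<epsilon>" "\<epsilon> < \<alpha>"
    and "\<And>A. A \<in> sets borel \<Longrightarrow> measure \<mu>1 A \<le> measure \<mu>2 (enlarge A \<epsilon>) + \<epsilon>"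
  shows "prokhorov \<mu>1 \<mu>2 < \<alpha>"
proof -
  have "prokhorov \<mu>1 \<mu>2 \<le> \<epsilon>" unfolding prokhorov_def
    by (rule cInf_lower) (use assms in \<open>auto intro!: bdd_belowI[of _ 0]\<close>)
  then show ?thesis using assms by simp
qed

lemma prokhorov_self:
  assumes "\<mu> \<in> space MX" "\<alpha> > 0"
  shows "prokhorov \<mu> (\<mu>::'a::metric_space measure) < \<alpha>"
proof (rule prokhorov_lessI[of "\<alpha>/2"])
  fix A :: "'a set" assume "A \<in> sets borel"
  have ps: "prob_space \<mu>" and sm: "sets \<mu> = sets borel" using assms by (auto simp: space_prob_algebra)
  interpret p: prob_space \<mu> by fact
  have "measure \<mu> A \<le> measure \<mu> (enlarge A (\<alpha>/2))"
    using assms enlarge_sets[of A "\<alpha>/2"] enlarge_sub[of "\<alpha>/2" A] sm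
    by (intro p.finite_measure_mono) auto
  then show "measure \<mu> A \<le> measure \<mu> (enlarge A (\<alpha>/2)) + \<alpha>/2" using assms by simp
qed (use assms in auto)

lemma g_meas:
  fixes B :: "'a::metric_space set"
  assumes "B \<in> sets borel"
  shows "(\<lambda>z. if z \<in> B then y else z) \<in> borel \<rightarrow>\<^sub>M borel"
  by (rule measurable_If_set) (use assms in simp_all)

lemma prokhorov_move:
  fixes B :: "'a::metric_space set"
  assumes "\<mu> \<in> space MX" "B \<in> sets borel" "measure \<mu> B < \<alpha>"
  shows "prokhorov \<mu> (distr \<mu> borel (\<lambda>z. if z \<in> B then y else z)) < \<alpha>"
proof -
  let ?g = "\<lambda>z. if z \<in> B then y else z"
  have ps: "prob_space \<mu>" and sm: "sets \<mu> = sets borel" using assms by (auto simp: space_prob_algebra)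
  have gm: "?g \<in> \<mu> \<rightarrow>\<^sub>M borel" unfolding measurable_cong_sets[OF sm refl] by (rule g_meas[OF assms(2)])
  have m0: "0 \<le> measure \<mu> B" by simp
  define \<epsilon> where "\<epsilon> = (measure \<mu> B + \<alpha>) / 2"
  show ?thesis
  proof (rule prokhorov_lessI[of \<epsilon>])
    have s0: "0 < measure \<mu> B + \<alpha>" using assms(3) m0 by linarith
    show e0: "0 < \<epsilon>" "\<epsilon> < \<alpha>" using assms(3) s0 by (auto simp: \<epsilon>_def)
    fix A :: "'a set" assume A: "A \<in> sets borel"
    have pre: "?g -` enlarge A \<epsilon> \<inter> space \<mu> \<in> sets \<mu>"
      using gm enlarge_sets by (auto intro: measurable_sets)
    have "measure \<mu> A \<le> measure \<mu> (A - B) + measure \<mu> B"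
      using ps A assms(2) sm
    proof -
      interpret p: prob_space \<mu> by fact
      have "A \<subseteq> (A - B) \<union> B" by auto
      then have "measure \<mu> A \<le> measure \<mu> ((A - B) \<union> B)"
        using A assms(2) sm by (intro p.finite_measure_mono) auto
      also have "\<dots> \<le> measure \<mu> (A - B) + measure \<mu> B"
        using A assms(2) sm by (intro measure_Un_le) auto
      finally show ?thesis .
    qed
    also have "measure \<mu> (A - B) \<le> measure \<mu> (?g -` enlarge A \<epsilon> \<inter> space \<mu>)"
      using ps pre enlarge_sub[OF e0(1), of A]
      by (intro finite_measure.finite_measure_mono) (auto simp: sets_eq_imp_space_eq[OF sm] prob_space_def)
    also have "measure \<mu> (?g -` enlarge A \<epsilon> \<inter> space \<mu>) = measure (distr \<mu> borel ?g) (enlarge A \<epsilon>)"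
      using gm enlarge_sets[of A \<epsilon>] by (simp add: measure_distr)
    finally have "measure \<mu> A \<le> measure (distr \<mu> borel ?g) (enlarge A \<epsilon>) + measure \<mu> B" by simp
    moreover have "measure \<mu> B \<le> \<epsilon>" using assms(3) by (simp add: \<epsilon>_def)
    ultimately show "measure \<mu> A \<le> measure (distr \<mu> borel ?g) (enlarge A \<epsilon>) + \<epsilon>"
      by linarith
  qed
qed

lemma lik_move_zero:
  fixes x :: "nat \<Rightarrow> 'a::metric_space"
  assumes "\<mu> \<in> space MX" "y \<notin> ball (x 0) \<delta>" "1 \<le> n"
  shows "data_lik n x \<delta> (distr \<mu> borel (\<lambda>z. if z \<in> ball (x 0) \<delta> then y else z)) = 0"
proof -
  let ?g = "\<lambda>z. if z \<in> ball (x 0) \<delta> then y else z"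
  have ps: "prob_space \<mu>" and sm: "sets \<mu> = sets borel" using assms by (auto simp: space_prob_algebra)
  have gm: "?g \<in> \<mu> \<rightarrow>\<^sub>M borel" unfolding measurable_cong_sets[OF sm refl] by (rule g_meas) simp
  have "prob_space (distr \<mu> borel ?g)" using ps gm by (simp add: prob_space.prob_space_distr)
  moreover have "measure (distr \<mu> borel ?g) (ball (x 0) \<delta>) = 0"
  proof -
    have "?g -` ball (x 0) \<delta> \<inter> space \<mu> = {}" using assms(2) by (auto split: if_splits)
    then show ?thesis using gm by (simp add: measure_distr)
  qed
  ultimately show ?thesis using assms(3)
    by (subst data_lik_eq) (auto intro!: prod_zero bexI[of _ 0])
qed


lemma main_construct:
  fixes P :: "'t::polish_space \<Rightarrow> 'x::polish_space measure" and x :: "nat \<Rightarrow> 'x"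
    and \<pi>\<Theta> :: "'t measure"
  assumes P_meas: "P \<in> borel \<rightarrow>\<^sub>M MX"
    and prior: "\<pi>\<Theta> \<in> space (prob_algebra borel)"
    and small: "\<And>\<theta>. measure (P \<theta>) (ball (x 0) \<delta>) < \<alpha>" and y: "y \<notin> ball (x 0) \<delta>"
    and n: "1 \<le> n"
    and D: "D \<in> sets MX"
  defines "T \<equiv> \<lambda>\<mu>. if \<mu> \<in> D then \<mu> else distr \<mu> borel (\<lambda>z. if z \<in> ball (x 0) \<delta> then y else z)"
  defines "\<pi>a \<equiv> distr \<pi>\<Theta> (restrict_space MX (A_alpha (range P) \<alpha>)) (\<lambda>\<theta>. T (P \<theta>))"
  shows "\<pi>a \<in> Pi_alpha (range P) (distr \<pi>\<Theta> (restrict_space MX (range P)) P) \<alpha>"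
   and "\<And>h. h \<in> borel_measurable MX \<Longrightarrow> (\<integral>\<^sup>+\<mu>. ennreal (h \<mu> * data_lik n x \<delta> \<mu>) \<partial>\<pi>a)
          = (\<integral>\<^sup>+\<theta>. ennreal (indicator (P -` D) \<theta> * h (P \<theta>) * data_lik n x \<delta> (P \<theta>)) \<partial>\<pi>\<Theta>)"
   and "integral\<^sup>L \<pi>a (data_lik n x \<delta>) = (\<integral>\<theta>. indicator (P -` D) \<theta> * data_lik n x \<delta> (P \<theta>) \<partial>\<pi>\<Theta>)"
proof -
  have Pm: "\<And>\<theta>. P \<theta> \<in> space MX" using measurable_space[OF P_meas] by simp
  have psT: "prob_space \<pi>\<Theta>" and smT: "sets \<pi>\<Theta> = sets borel"
    using prior by (auto simp: space_prob_algebra)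
  have a0: "\<alpha> > 0" using small[of undefined] measure_nonneg[of "P undefined" "ball (x 0) \<delta>"] by linarith
  have Tm: "T \<in> MX \<rightarrow>\<^sub>M MX" unfolding T_def
  proof (rule measurable_If_set)
    show "(\<lambda>\<mu>. \<mu>) \<in> MX \<rightarrow>\<^sub>M MX" by (rule measurable_ident_sets) simp
    show "(\<lambda>\<mu>. distr \<mu> borel (\<lambda>z. if z \<in> ball (x 0) \<delta> then y else z)) \<in> MX \<rightarrow>\<^sub>M MX"
      by (rule measurable_distr_prob_space[OF g_meas]) simp
    show "D \<inter> space MX \<in> sets MX" using D by simp
  qed
  have TA: "T (P \<theta>) \<in> A_alpha (range P) \<alpha>" for \<theta>
  proof -
    have "T (P \<theta>) \<in> space MX" using measurable_space[OF Tm Pm] .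
    moreover have "prokhorov (P \<theta>) (T (P \<theta>)) < \<alpha>"
    proof (cases "P \<theta> \<in> D")
      case True then show ?thesis unfolding T_def using prokhorov_self[OF Pm a0] by simp
    next
      case False then show ?thesis unfolding T_def using prokhorov_move[OF Pm _ small, of \<theta>] by simp
    qed
    ultimately show ?thesis unfolding A_alpha_def by auto
  qed
  have TPm0: "(\<lambda>\<theta>. T (P \<theta>)) \<in> borel \<rightarrow>\<^sub>M MX" using measurable_comp[OF P_meas Tm] by (simp add: comp_def)
  have TPm: "(\<lambda>\<theta>. T (P \<theta>)) \<in> \<pi>\<Theta> \<rightarrow>\<^sub>M restrict_space MX (A_alpha (range P) \<alpha>)"
    unfolding measurable_cong_sets[OF smT refl]
    by (rule measurable_restrict_space2) (use TPm0 TA in auto)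
  show "\<pi>a \<in> Pi_alpha (range P) (distr \<pi>\<Theta> (restrict_space MX (range P)) P) \<alpha>"
  proof -
    let ?R = "restrict_space (MX \<Otimes>\<^sub>M MX) (A_rel (range P) \<alpha>)"
    define \<pi> where "\<pi> = distr \<pi>\<Theta> ?R (\<lambda>\<theta>. (P \<theta>, T (P \<theta>)))"
    have pairm: "(\<lambda>\<theta>. (P \<theta>, T (P \<theta>))) \<in> \<pi>\<Theta> \<rightarrow>\<^sub>M ?R"
      unfolding measurable_cong_sets[OF smT refl]
    proof (rule measurable_restrict_space2)
      show "(\<lambda>\<theta>. (P \<theta>, T (P \<theta>))) \<in> borel \<rightarrow>\<^sub>M MX \<Otimes>\<^sub>M MX"
        using P_meas TPm0 by (rule measurable_Pair)
      show "(\<lambda>\<theta>. (P \<theta>, T (P \<theta>))) \<in> space borel \<rightarrow> A_rel (range P) \<alpha>"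
      proof
        fix \<theta> :: 't
        have "T (P \<theta>) \<in> space MX" using measurable_space[OF Tm Pm] .
        moreover have "prokhorov (P \<theta>) (T (P \<theta>)) < \<alpha>"
        proof (cases "P \<theta> \<in> D")
      case True then show ?thesis unfolding T_def using prokhorov_self[OF Pm a0] by simp
    next
      case False then show ?thesis unfolding T_def using prokhorov_move[OF Pm _ small, of \<theta>] by simp
    qed
        ultimately show "(P \<theta>, T (P \<theta>)) \<in> A_rel (range P) \<alpha>" unfolding A_rel_def by auto
      qed
    qed
    have fstm: "fst \<in> ?R \<rightarrow>\<^sub>M restrict_space MX (range P)"
    proof (rule measurable_restrict_space2)
      show "fst \<in> space ?R \<rightarrow> range P" by (auto simp: space_restrict_space A_rel_def)
      show "fst \<in> ?R \<rightarrow>\<^sub>M MX" by (rule measurable_restrict_space1) (rule measurable_fst)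
    qed
    have sndm: "snd \<in> ?R \<rightarrow>\<^sub>M restrict_space MX (A_alpha (range P) \<alpha>)"
    proof (rule measurable_restrict_space2)
      show "snd \<in> space ?R \<rightarrow> A_alpha (range P) \<alpha>" by (auto simp: space_restrict_space A_rel_def A_alpha_def)
      show "snd \<in> ?R \<rightarrow>\<^sub>M MX" by (rule measurable_restrict_space1) (rule measurable_snd)
    qed
    have "\<pi> \<in> space (prob_algebra ?R)"
      unfolding \<pi>_def space_prob_algebra using psT pairm
      by (auto intro: prob_space.prob_space_distr)
    moreover have "distr \<pi> (restrict_space MX (range P)) fst = distr \<pi>\<Theta> (restrict_space MX (range P)) P"
      unfolding \<pi>_def by (subst distr_distr[OF fstm pairm]) (simp add: comp_def)
    moreover have "distr \<pi> (restrict_space MX (A_alpha (range P) \<alpha>)) snd = \<pi>a"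
      unfolding \<pi>_def \<pi>a_def by (subst distr_distr[OF sndm pairm]) (simp add: comp_def)
    moreover have "\<pi>a \<in> space (prob_algebra (restrict_space MX (A_alpha (range P) \<alpha>)))"
      unfolding \<pi>a_def space_prob_algebra using psT TPm
      by (auto intro: prob_space.prob_space_distr)
    ultimately show ?thesis unfolding Pi_alpha_def by blast
  qed
  have pw: "data_lik n x \<delta> (T (P \<theta>)) = indicator (P -` D) \<theta> * data_lik n x \<delta> (P \<theta>)" for \<theta>
    unfolding T_def using lik_move_zero[where x=x, OF Pm[of \<theta>] y n] by (auto simp: indicator_def)
  have likm: "data_lik n x \<delta> \<in> borel_measurable (restrict_space MX (A_alpha (range P) \<alpha>))"
    by (rule measurable_restrict_space1[OF data_lik_meas])
  show "\<And>h. h \<in> borel_measurable MX \<Longrightarrow> (\<integral>\<^sup>+\<mu>. ennreal (h \<mu> * data_lik n x \<delta> \<mu>) \<partial>\<pi>a)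
          = (\<integral>\<^sup>+\<theta>. ennreal (indicator (P -` D) \<theta> * h (P \<theta>) * data_lik n x \<delta> (P \<theta>)) \<partial>\<pi>\<Theta>)"
  proof -
    fix h :: "'x measure \<Rightarrow> real" assume hm: "h \<in> borel_measurable MX"
    have fm: "(\<lambda>\<mu>. ennreal (h \<mu> * data_lik n x \<delta> \<mu>)) \<in> borel_measurable (restrict_space MX (A_alpha (range P) \<alpha>))"
      using hm data_lik_meas by (intro measurable_restrict_space1) measurable
    have fm': "(\<lambda>\<mu>. ennreal (h \<mu> * data_lik n x \<delta> \<mu>)) \<in> borel_measurable (distr \<pi>\<Theta> (restrict_space MX (A_alpha (range P) \<alpha>)) (\<lambda>\<theta>. T (P \<theta>)))"
      unfolding measurable_cong_sets[OF sets_distr refl] by (rule fm)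
    show "?thesis h" unfolding \<pi>a_def
      apply (subst nn_integral_distr[OF TPm fm'])
      apply (rule nn_integral_cong)
      apply (simp add: pw)
      unfolding T_def by (auto simp: indicator_def)
  qed
  show "integral\<^sup>L \<pi>a (data_lik n x \<delta>) = (\<integral>\<theta>. indicator (P -` D) \<theta> * data_lik n x \<delta> (P \<theta>) \<partial>\<pi>\<Theta>)"
    unfolding \<pi>a_def by (subst integral_distr[OF TPm likm]) (simp add: pw)
qed


lemma ereal_integral_split:
  assumes "integrable M f"
  shows "enn2ereal (\<integral>\<^sup>+x. ennreal (f x) \<partial>M) - enn2ereal (\<integral>\<^sup>+x. ennreal (- f x) \<partial>M) = ereal (integral\<^sup>L M f)"
proof -
  let ?a = "\<integral>\<^sup>+x. ennreal (f x) \<partial>M" and ?b = "\<integral>\<^sup>+x. ennreal (- f x) \<partial>M"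
  have a: "?a = ennreal (enn2real ?a)" using integrableD(2)[OF assms] by (simp add: ennreal_enn2real_if)
  have b: "?b = ennreal (enn2real ?b)" using integrableD(3)[OF assms] by (simp add: ennreal_enn2real_if)
  have "enn2ereal ?a = ereal (enn2real ?a)" by (subst a) (simp add: enn2ereal_ennreal)
  moreover have "enn2ereal ?b = ereal (enn2real ?b)" by (subst b) (simp add: enn2ereal_ennreal)
  ultimately show ?thesis using real_lebesgue_integral_def[OF assms] by simp
qed

lemma measure_pos_of_emeasure:
  assumes "prob_space \<mu>" "emeasure \<mu> A > 0"
  shows "measure \<mu> A > 0"
proof -
  interpret p: prob_space \<mu> by fact
  show ?thesis using assms(2) by (simp add: p.emeasure_eq_measure)
qed

lemma post_step:
  fixes P :: "'t::polish_space \<Rightarrow> 'x::polish_space measure" and x :: "nat \<Rightarrow> 'x"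
    and \<pi>\<Theta> :: "'t measure" and \<Phi>0 :: "'x measure \<Rightarrow> real"
  assumes P_meas: "P \<in> borel \<rightarrow>\<^sub>M MX"
    and P_pos': "\<forall>\<mu>\<in>range P. \<forall>(x::'x) \<delta>. \<delta> > 0 \<longrightarrow> emeasure \<mu> (ball x \<delta>) > 0"
    and prior: "\<pi>\<Theta> \<in> space (prob_algebra borel)"
    and Phi_meas: "\<Phi>0 \<in> borel_measurable MX"
    and small: "\<And>\<theta>. measure (P \<theta>) (ball (x 0) \<delta>) < \<alpha>" and y: "y \<notin> ball (x 0) \<delta>"
    and n: "1 \<le> n" and d0: "0 < \<delta>"
  shows "emeasure \<pi>\<Theta> {\<theta>. r < \<Phi>0 (P \<theta>)} \<noteq> 0 \<Longrightarrow>
           ereal r \<le> upper_post \<Phi>0 (Pi_alpha (range P) (distr \<pi>\<Theta> (restrict_space MX (range P)) P) \<alpha>) n x \<delta>"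
    and "emeasure \<pi>\<Theta> {\<theta>. \<Phi>0 (P \<theta>) < r} \<noteq> 0 \<Longrightarrow>
           lower_post \<Phi>0 (Pi_alpha (range P) (distr \<pi>\<Theta> (restrict_space MX (range P)) P) \<alpha>) n x \<delta> \<le> ereal r"
proof -
  have P_pos: "\<And>\<mu> (x::'x) \<delta>. \<mu> \<in> range P \<Longrightarrow> \<delta> > 0 \<Longrightarrow> emeasure \<mu> (ball x \<delta>) > 0"
    using P_pos' by blast
  have Pm: "\<And>\<theta>. P \<theta> \<in> space MX" using measurable_space[OF P_meas] by simp
  have psT: "prob_space \<pi>\<Theta>" and smT: "sets \<pi>\<Theta> = sets borel"
    using prior by (auto simp: space_prob_algebra)
  interpret pT: prob_space \<pi>\<Theta> by (rule psT)
  have spT: "space \<pi>\<Theta> = UNIV" using sets_eq_imp_space_eq[OF smT] by simp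
  have Pm': "P \<in> \<pi>\<Theta> \<rightarrow>\<^sub>M MX" unfolding measurable_cong_sets[OF smT refl] by (rule P_meas)
  have likP: "0 < data_lik n x \<delta> (P \<theta>) \<and> data_lik n x \<delta> (P \<theta>) \<le> 1" for \<theta>
  proof -
    have ps: "prob_space (P \<theta>)" and sm: "sets (P \<theta>) = sets borel" using Pm[of \<theta>] by (auto simp: space_prob_algebra)
    have "0 < data_lik n x \<delta> (P \<theta>)"
      unfolding data_lik_eq[OF ps sm]
      by (rule prod_pos) (auto intro!: measure_pos_of_emeasure[OF ps] P_pos d0)
    then show ?thesis using data_lik_bounds[OF ps sm] by simp
  qed
  have likPm: "(\<lambda>\<theta>. data_lik n x \<delta> (P \<theta>)) \<in> borel_measurable \<pi>\<Theta>"
    using measurable_comp[OF Pm' data_lik_meas] by (simp add: comp_def)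
  have Phim: "(\<lambda>\<theta>. \<Phi>0 (P \<theta>)) \<in> borel_measurable \<pi>\<Theta>"
    using measurable_comp[OF Pm' Phi_meas] by (simp add: comp_def)
  let ?Pa = "Pi_alpha (range P) (distr \<pi>\<Theta> (restrict_space MX (range P)) P) \<alpha>"
  let ?lik = "data_lik n x \<delta>"
  have generic: "\<exists>\<pi>a\<in>?Pa. integral\<^sup>L \<pi>a ?lik = (\<integral>\<theta>. indicator (P -` D) \<theta> * ?lik (P \<theta>) \<partial>\<pi>\<Theta>)
        \<and> (\<integral>\<theta>. indicator (P -` D) \<theta> * ?lik (P \<theta>) \<partial>\<pi>\<Theta>) > 0
        \<and> integrable \<pi>\<Theta> (\<lambda>\<theta>. indicator (P -` D) \<theta> * ?lik (P \<theta>))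
        \<and> ext_integral \<pi>a (\<lambda>\<mu>. \<Phi>0 \<mu> * ?lik \<mu>) =
           enn2ereal (\<integral>\<^sup>+\<theta>. ennreal (indicator (P -` D) \<theta> * \<Phi>0 (P \<theta>) * ?lik (P \<theta>)) \<partial>\<pi>\<Theta>)
         - enn2ereal (\<integral>\<^sup>+\<theta>. ennreal (indicator (P -` D) \<theta> * (- \<Phi>0 (P \<theta>)) * ?lik (P \<theta>)) \<partial>\<pi>\<Theta>)"
    if D: "D \<in> sets MX" and Dpos: "emeasure \<pi>\<Theta> (P -` D) \<noteq> 0" for D
  proof -
    note mc = main_construct[where x=x and \<delta>=\<delta> and \<alpha>=\<alpha>, OF P_meas prior small y n D]
    let ?\<pi>a = "distr \<pi>\<Theta> (restrict_space MX (A_alpha (range P) \<alpha>))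
          (\<lambda>\<theta>. if P \<theta> \<in> D then P \<theta> else distr (P \<theta>) borel (\<lambda>z. if z \<in> ball (x 0) \<delta> then y else z))"
    let ?L = "\<lambda>\<theta>. indicator (P -` D) \<theta> * ?lik (P \<theta>)"
    have Em: "P -` D \<in> sets \<pi>\<Theta>" using measurable_sets[OF Pm' D] spT by simp
    have Lm: "?L \<in> borel_measurable \<pi>\<Theta>"
      using Em likPm by measurable
    have Lint: "integrable \<pi>\<Theta> ?L"
    proof (rule pT.integrable_const_bound[where B=1])
      show "AE \<theta> in \<pi>\<Theta>. norm (?L \<theta>) \<le> 1" proof (intro AE_I2) fix \<theta> show "norm (?L \<theta>) \<le> 1" using likP[of \<theta>] by (auto simp: indicator_def) qed
    qed (rule Lm)
    have Lpos: "integral\<^sup>L \<pi>\<Theta> ?L > 0"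
    proof -
      have nn: "AE \<theta> in \<pi>\<Theta>. 0 \<le> ?L \<theta>" proof (intro AE_I2) fix \<theta> show "0 \<le> ?L \<theta>" using likP[of \<theta>] by (auto simp: indicator_def less_imp_le) qed
      have "integral\<^sup>L \<pi>\<Theta> ?L \<noteq> 0"
      proof
        assume "integral\<^sup>L \<pi>\<Theta> ?L = 0"
        then have "AE \<theta> in \<pi>\<Theta>. ?L \<theta> = 0"
          using integral_nonneg_eq_0_iff_AE[OF Lint nn] by simp
        then have "AE \<theta> in \<pi>\<Theta>. \<theta> \<notin> P -` D"
          by eventually_elim (metis likP indicator_simps(1) less_irrefl mult_1 vimage_eq)
        moreover have "{x \<in> space \<pi>\<Theta>. \<not> x \<notin> P -` D} = P -` D" using spT by (auto simp: vimage_def)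
        ultimately have "emeasure \<pi>\<Theta> (P -` D) = 0"
          using AE_iff_measurable[OF Em, of "\<lambda>\<theta>. \<theta> \<notin> P -` D"] by blast
        then show False using Dpos by simp
      qed
      moreover have "integral\<^sup>L \<pi>\<Theta> ?L \<ge> 0" by (rule integral_nonneg_AE[OF nn])
      ultimately show ?thesis by simp
    qed
    have e1: "(\<integral>\<^sup>+\<mu>. ennreal (\<Phi>0 \<mu> * ?lik \<mu>) \<partial>?\<pi>a) =
        (\<integral>\<^sup>+\<theta>. ennreal (indicator (P -` D) \<theta> * \<Phi>0 (P \<theta>) * ?lik (P \<theta>)) \<partial>\<pi>\<Theta>)"
      by (rule mc(2)[OF Phi_meas])
    have e2: "(\<integral>\<^sup>+\<mu>. ennreal ((- \<Phi>0 \<mu>) * ?lik \<mu>) \<partial>?\<pi>a) =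
        (\<integral>\<^sup>+\<theta>. ennreal (indicator (P -` D) \<theta> * (- \<Phi>0 (P \<theta>)) * ?lik (P \<theta>)) \<partial>\<pi>\<Theta>)"
      by (rule mc(2)) (use Phi_meas in measurable)
    have "ext_integral ?\<pi>a (\<lambda>\<mu>. \<Phi>0 \<mu> * ?lik \<mu>) =
           enn2ereal (\<integral>\<^sup>+\<theta>. ennreal (indicator (P -` D) \<theta> * \<Phi>0 (P \<theta>) * ?lik (P \<theta>)) \<partial>\<pi>\<Theta>)
         - enn2ereal (\<integral>\<^sup>+\<theta>. ennreal (indicator (P -` D) \<theta> * (- \<Phi>0 (P \<theta>)) * ?lik (P \<theta>)) \<partial>\<pi>\<Theta>)"
      unfolding ext_integral_def e1 e2[symmetric] by simp
    then show ?thesis using mc(1) mc(3) Lpos Lint by (intro bexI[of _ ?\<pi>a]) auto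
  qed
  show "ereal r \<le> upper_post \<Phi>0 ?Pa n x \<delta>" if rpos: "emeasure \<pi>\<Theta> {\<theta>. r < \<Phi>0 (P \<theta>)} \<noteq> 0"
  proof -
    define D where "D = {\<mu> \<in> space MX. r < \<Phi>0 \<mu>}"
    have D: "D \<in> sets MX" unfolding D_def using Phi_meas by measurable
    have PD: "P -` D = {\<theta>. r < \<Phi>0 (P \<theta>)}" unfolding D_def using Pm by auto
    obtain \<pi>a where pa: "\<pi>a \<in> ?Pa"
      and I: "integral\<^sup>L \<pi>a ?lik = (\<integral>\<theta>. indicator (P -` D) \<theta> * ?lik (P \<theta>) \<partial>\<pi>\<Theta>)"
      and Ipos: "(\<integral>\<theta>. indicator (P -` D) \<theta> * ?lik (P \<theta>) \<partial>\<pi>\<Theta>) > 0"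
      and Lint: "integrable \<pi>\<Theta> (\<lambda>\<theta>. indicator (P -` D) \<theta> * ?lik (P \<theta>))"
      and ext: "ext_integral \<pi>a (\<lambda>\<mu>. \<Phi>0 \<mu> * ?lik \<mu>) =
           enn2ereal (\<integral>\<^sup>+\<theta>. ennreal (indicator (P -` D) \<theta> * \<Phi>0 (P \<theta>) * ?lik (P \<theta>)) \<partial>\<pi>\<Theta>)
         - enn2ereal (\<integral>\<^sup>+\<theta>. ennreal (indicator (P -` D) \<theta> * (- \<Phi>0 (P \<theta>)) * ?lik (P \<theta>)) \<partial>\<pi>\<Theta>)"
      using generic[OF D] rpos PD by auto
    define I0 where "I0 = (\<integral>\<theta>. indicator (P -` D) \<theta> * ?lik (P \<theta>) \<partial>\<pi>\<Theta>)"
    let ?L = "\<lambda>\<theta>. indicator (P -` D) \<theta> * ?lik (P \<theta>)"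
    have pw: "r * ?L \<theta> \<le> indicator (P -` D) \<theta> * \<Phi>0 (P \<theta>) * ?lik (P \<theta>)" for \<theta>
    proof (cases "\<theta> \<in> P -` D")
      case True
      then have "r \<le> \<Phi>0 (P \<theta>)" using PD by auto
      then show ?thesis using True likP[of \<theta>] by (simp add: mult_right_mono less_imp_le)
    qed simp
    have "enn2ereal (\<integral>\<^sup>+\<theta>. ennreal (r * ?L \<theta>) \<partial>\<pi>\<Theta>) - enn2ereal (\<integral>\<^sup>+\<theta>. ennreal (- (r * ?L \<theta>)) \<partial>\<pi>\<Theta>)
        \<le> ext_integral \<pi>a (\<lambda>\<mu>. \<Phi>0 \<mu> * ?lik \<mu>)"
      unfolding ext
    proof (rule ereal_minus_mono)
      show "enn2ereal (\<integral>\<^sup>+\<theta>. ennreal (r * ?L \<theta>) \<partial>\<pi>\<Theta>)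
          \<le> enn2ereal (\<integral>\<^sup>+\<theta>. ennreal (indicator (P -` D) \<theta> * \<Phi>0 (P \<theta>) * ?lik (P \<theta>)) \<partial>\<pi>\<Theta>)"
        unfolding less_eq_ennreal.rep_eq[symmetric]
        by (rule nn_integral_mono) (use pw in \<open>auto intro: ennreal_leI\<close>)
      show "enn2ereal (\<integral>\<^sup>+\<theta>. ennreal (indicator (P -` D) \<theta> * (- \<Phi>0 (P \<theta>)) * ?lik (P \<theta>)) \<partial>\<pi>\<Theta>)
          \<le> enn2ereal (\<integral>\<^sup>+\<theta>. ennreal (- (r * ?L \<theta>)) \<partial>\<pi>\<Theta>)"
        unfolding less_eq_ennreal.rep_eq[symmetric]
      proof (rule nn_integral_mono)
        fix \<theta> show "ennreal (indicator (P -` D) \<theta> * (- \<Phi>0 (P \<theta>)) * ?lik (P \<theta>)) \<le> ennreal (- (r * ?L \<theta>))"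
          using pw[of \<theta>] by (intro ennreal_leI) simp
      qed
    qed
    also have "enn2ereal (\<integral>\<^sup>+\<theta>. ennreal (r * ?L \<theta>) \<partial>\<pi>\<Theta>) - enn2ereal (\<integral>\<^sup>+\<theta>. ennreal (- (r * ?L \<theta>)) \<partial>\<pi>\<Theta>)
        = ereal (r * I0)"
      unfolding I0_def using ereal_integral_split[of \<pi>\<Theta> "\<lambda>\<theta>. r * ?L \<theta>"] Lint by simp
    finally have "ereal (r * I0) \<le> ext_integral \<pi>a (\<lambda>\<mu>. \<Phi>0 \<mu> * ?lik \<mu>)" .
    then have "ereal (r * I0) / ereal I0 \<le> post_value \<Phi>0 n x \<delta> \<pi>a"
      unfolding post_value_def I I0_def[symmetric] using Ipos I0_def
      by (intro ereal_divide_right_mono) auto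
    moreover have "ereal (r * I0) / ereal I0 = ereal r" using Ipos I0_def by simp
    ultimately have "ereal r \<le> post_value \<Phi>0 n x \<delta> \<pi>a" by simp
    also have "post_value \<Phi>0 n x \<delta> \<pi>a \<le> upper_post \<Phi>0 ?Pa n x \<delta>"
      unfolding upper_post_def using pa I Ipos by (intro Sup_upper) auto
    finally show ?thesis .
  qed
  show "lower_post \<Phi>0 ?Pa n x \<delta> \<le> ereal r" if rpos: "emeasure \<pi>\<Theta> {\<theta>. \<Phi>0 (P \<theta>) < r} \<noteq> 0"
  proof -
    define D where "D = {\<mu> \<in> space MX. \<Phi>0 \<mu> < r}"
    have D: "D \<in> sets MX" unfolding D_def using Phi_meas by measurable
    have PD: "P -` D = {\<theta>. \<Phi>0 (P \<theta>) < r}" unfolding D_def using Pm by auto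
    obtain \<pi>a where pa: "\<pi>a \<in> ?Pa"
      and I: "integral\<^sup>L \<pi>a ?lik = (\<integral>\<theta>. indicator (P -` D) \<theta> * ?lik (P \<theta>) \<partial>\<pi>\<Theta>)"
      and Ipos: "(\<integral>\<theta>. indicator (P -` D) \<theta> * ?lik (P \<theta>) \<partial>\<pi>\<Theta>) > 0"
      and Lint: "integrable \<pi>\<Theta> (\<lambda>\<theta>. indicator (P -` D) \<theta> * ?lik (P \<theta>))"
      and ext: "ext_integral \<pi>a (\<lambda>\<mu>. \<Phi>0 \<mu> * ?lik \<mu>) =
           enn2ereal (\<integral>\<^sup>+\<theta>. ennreal (indicator (P -` D) \<theta> * \<Phi>0 (P \<theta>) * ?lik (P \<theta>)) \<partial>\<pi>\<Theta>)
         - enn2ereal (\<integral>\<^sup>+\<theta>. ennreal (indicator (P -` D) \<theta> * (- \<Phi>0 (P \<theta>)) * ?lik (P \<theta>)) \<partial>\<pi>\<Theta>)"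
      using generic[OF D] rpos PD by auto
    define I0 where "I0 = (\<integral>\<theta>. indicator (P -` D) \<theta> * ?lik (P \<theta>) \<partial>\<pi>\<Theta>)"
    let ?L = "\<lambda>\<theta>. indicator (P -` D) \<theta> * ?lik (P \<theta>)"
    have pw: "indicator (P -` D) \<theta> * \<Phi>0 (P \<theta>) * ?lik (P \<theta>) \<le> r * ?L \<theta>" for \<theta>
    proof (cases "\<theta> \<in> P -` D")
      case True
      then have "\<Phi>0 (P \<theta>) \<le> r" using PD by auto
      then show ?thesis using True likP[of \<theta>] by (simp add: mult_right_mono less_imp_le)
    qed simp
    have "ext_integral \<pi>a (\<lambda>\<mu>. \<Phi>0 \<mu> * ?lik \<mu>) \<le>
        enn2ereal (\<integral>\<^sup>+\<theta>. ennreal (r * ?L \<theta>) \<partial>\<pi>\<Theta>) - enn2ereal (\<integral>\<^sup>+\<theta>. ennreal (- (r * ?L \<theta>)) \<partial>\<pi>\<Theta>)"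
      unfolding ext
    proof (rule ereal_minus_mono)
      show "enn2ereal (\<integral>\<^sup>+\<theta>. ennreal (indicator (P -` D) \<theta> * \<Phi>0 (P \<theta>) * ?lik (P \<theta>)) \<partial>\<pi>\<Theta>)
          \<le> enn2ereal (\<integral>\<^sup>+\<theta>. ennreal (r * ?L \<theta>) \<partial>\<pi>\<Theta>)"
        unfolding less_eq_ennreal.rep_eq[symmetric]
        by (rule nn_integral_mono) (use pw in \<open>auto intro: ennreal_leI\<close>)
      show "enn2ereal (\<integral>\<^sup>+\<theta>. ennreal (- (r * ?L \<theta>)) \<partial>\<pi>\<Theta>)
          \<le> enn2ereal (\<integral>\<^sup>+\<theta>. ennreal (indicator (P -` D) \<theta> * (- \<Phi>0 (P \<theta>)) * ?lik (P \<theta>)) \<partial>\<pi>\<Theta>)"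
        unfolding less_eq_ennreal.rep_eq[symmetric]
      proof (rule nn_integral_mono)
        fix \<theta> show "ennreal (- (r * ?L \<theta>)) \<le> ennreal (indicator (P -` D) \<theta> * (- \<Phi>0 (P \<theta>)) * ?lik (P \<theta>))"
          using pw[of \<theta>] by (intro ennreal_leI) simp
      qed
    qed
    also have "enn2ereal (\<integral>\<^sup>+\<theta>. ennreal (r * ?L \<theta>) \<partial>\<pi>\<Theta>) - enn2ereal (\<integral>\<^sup>+\<theta>. ennreal (- (r * ?L \<theta>)) \<partial>\<pi>\<Theta>)
        = ereal (r * I0)"
      unfolding I0_def using ereal_integral_split[of \<pi>\<Theta> "\<lambda>\<theta>. r * ?L \<theta>"] Lint by simp
    finally have "ext_integral \<pi>a (\<lambda>\<mu>. \<Phi>0 \<mu> * ?lik \<mu>) \<le> ereal (r * I0)" .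
    then have "post_value \<Phi>0 n x \<delta> \<pi>a \<le> ereal (r * I0) / ereal I0"
      unfolding post_value_def I I0_def[symmetric] using Ipos I0_def
      by (intro ereal_divide_right_mono) auto
    moreover have "ereal (r * I0) / ereal I0 = ereal r" using Ipos I0_def by simp
    ultimately have "post_value \<Phi>0 n x \<delta> \<pi>a \<le> ereal r" by simp
    have "lower_post \<Phi>0 ?Pa n x \<delta> \<le> post_value \<Phi>0 n x \<delta> \<pi>a"
      unfolding lower_post_def using pa I Ipos by (intro Inf_lower) auto
    also note \<open>post_value \<Phi>0 n x \<delta> \<pi>a \<le> ereal r\<close>
    finally show ?thesis .
  qed
qed


lemma pi0_emeasure:
  fixes P :: "'t::polish_space \<Rightarrow> 'x::polish_space measure" and \<pi>\<Theta> :: "'t measure"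
  assumes P_meas: "P \<in> borel \<rightarrow>\<^sub>M MX"
    and prior: "\<pi>\<Theta> \<in> space (prob_algebra borel)"
    and S: "{\<mu> \<in> space MX. Q \<mu>} \<in> sets MX"
  shows "emeasure (distr \<pi>\<Theta> (restrict_space MX (range P)) P)
           {y \<in> space (distr \<pi>\<Theta> (restrict_space MX (range P)) P). Q y} = emeasure \<pi>\<Theta> {\<theta>. Q (P \<theta>)}"
proof -
  have Pm: "\<And>\<theta>. P \<theta> \<in> space MX" using measurable_space[OF P_meas] by simp
  have smT: "sets \<pi>\<Theta> = sets borel" using prior by (auto simp: space_prob_algebra)
  have spT: "space \<pi>\<Theta> = UNIV" using sets_eq_imp_space_eq[OF smT] by simp
  have Pm': "P \<in> \<pi>\<Theta> \<rightarrow>\<^sub>M restrict_space MX (range P)"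
    unfolding measurable_cong_sets[OF smT refl]
    by (rule measurable_restrict_space2) (use P_meas in auto)
  have A: "{y \<in> space (distr \<pi>\<Theta> (restrict_space MX (range P)) P). Q y} = range P \<inter> {\<mu> \<in> space MX. Q \<mu>}"
    by (auto simp: space_restrict_space)
  have Am: "range P \<inter> {\<mu> \<in> space MX. Q \<mu>} \<in> sets (restrict_space MX (range P))"
    unfolding sets_restrict_space by (rule imageI) (rule S)
  show ?thesis unfolding A
    by (subst emeasure_distr[OF Pm' Am]) (auto simp: spT Pm intro!: arg_cong[where f="emeasure \<pi>\<Theta>"])
qed


theorem theorem6p4:
  fixes P :: "'t::polish_space \<Rightarrow> 'x::polish_space measure"
    and \<pi>\<Theta> :: "'t measure"
    and \<Phi>0 :: "'x measure \<Rightarrow> real"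
  assumes P_meas: "P \<in> borel \<rightarrow>\<^sub>M MX"
    and P_pos: "\<And>\<mu> x \<delta>. \<mu> \<in> range P \<Longrightarrow> \<delta> > 0 \<Longrightarrow> emeasure \<mu> (ball x \<delta>) > 0"
    and prior: "\<pi>\<Theta> \<in> space (prob_algebra borel)"
    and Phi_meas: "\<Phi>0 \<in> borel_measurable MX"
    and Phi_semibdd: "(\<exists>c. \<forall>\<mu>\<in>space MX. \<Phi>0 \<mu> \<le> c) \<or> (\<exists>c. \<forall>\<mu>\<in>space MX. c \<le> \<Phi>0 \<mu>)"
    and small_balls: "((\<lambda>\<delta>. SUP x. SUP \<theta>. measure (P \<theta>) (ball x \<delta>)) \<longlongrightarrow> 0) (at_right 0)"
  shows "\<forall>\<alpha>>0. \<exists>\<delta>c>0. \<forall>\<delta> n (x :: nat \<Rightarrow> 'x). 0 < \<delta> \<and> \<delta> < \<delta>c \<and> 1 \<le> n \<longrightarrow>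
           (let \<pi>0 = distr \<pi>\<Theta> (restrict_space MX (range P)) P;
                Pa = Pi_alpha (range P) \<pi>0 \<alpha>
            in upper_post \<Phi>0 Pa n x \<delta> \<ge> ess_sup \<pi>0 \<Phi>0 \<and>
               lower_post \<Phi>0 Pa n x \<delta> \<le> ess_inf \<pi>0 \<Phi>0)"
  
proof (intro allI impI)
  fix \<alpha> :: real assume a0: "\<alpha> > 0"
  have Pm: "\<And>\<theta>. P \<theta> \<in> space MX" using measurable_space[OF P_meas] by simp
  have psP: "\<And>\<theta>. prob_space (P \<theta>)" and smP: "\<And>\<theta>. sets (P \<theta>) = sets borel"
    using Pm by (auto simp: space_prob_algebra)
  have le1: "\<And>\<theta> A. measure (P \<theta>) A \<le> 1" using psP by (rule prob_space.prob_le_1)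
  have "eventually (\<lambda>\<delta>. (SUP z. SUP \<theta>. measure (P \<theta>) (ball z \<delta>)) < min \<alpha> 1) (at_right 0)"
    by (rule order_tendstoD(2)[OF small_balls]) (use a0 in simp)
  then obtain b :: real where b0: "b > 0"
    and hb': "\<forall>\<delta>>0. \<delta> < b \<longrightarrow> (SUP z. SUP \<theta>. measure (P \<theta>) (ball z \<delta>)) < min \<alpha> 1"
    unfolding eventually_at_right_field by blast
  have hb: "(SUP z. SUP \<theta>. measure (P \<theta>) (ball z \<delta>)) < min \<alpha> 1" if "\<delta> > 0" "\<delta> < b" for \<delta>
    using hb' that by blast
  show "\<exists>\<delta>c>0. \<forall>\<delta> n (x :: nat \<Rightarrow> 'x). 0 < \<delta> \<and> \<delta> < \<delta>c \<and> 1 \<le> n \<longrightarrow>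
           (let \<pi>0 = distr \<pi>\<Theta> (restrict_space MX (range P)) P;
                Pa = Pi_alpha (range P) \<pi>0 \<alpha>
            in upper_post \<Phi>0 Pa n x \<delta> \<ge> ess_sup \<pi>0 \<Phi>0 \<and>
               lower_post \<Phi>0 Pa n x \<delta> \<le> ess_inf \<pi>0 \<Phi>0)"
  proof (intro exI[of _ b] conjI allI impI b0)
    fix \<delta> :: real and n :: nat and x :: "nat \<Rightarrow> 'x"
    assume H: "0 < \<delta> \<and> \<delta> < b \<and> 1 \<le> n"
    have d0: "0 < \<delta>" and n1: "1 \<le> n" using H by auto
    have bdd_in: "bdd_above (range (\<lambda>\<theta>. measure (P \<theta>) (ball z \<delta>)))" for z
      by (rule bdd_aboveI[of _ 1]) (auto intro: le1)
    have bdd_out: "bdd_above (range (\<lambda>z. SUP \<theta>. measure (P \<theta>) (ball z \<delta>)))"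
    proof (rule bdd_aboveI[of _ 1])
      fix v assume "v \<in> range (\<lambda>z. SUP \<theta>. measure (P \<theta>) (ball z \<delta>))"
      then obtain z where "v = (SUP \<theta>. measure (P \<theta>) (ball z \<delta>))" by blast
      then show "v \<le> 1" by (simp add: cSUP_least le1)
    qed
    have bnd: "measure (P \<theta>) (ball (x 0) \<delta>) < min \<alpha> 1" for \<theta>
    proof -
      have "measure (P \<theta>) (ball (x 0) \<delta>) \<le> (SUP \<theta>. measure (P \<theta>) (ball (x 0) \<delta>))"
        by (rule cSUP_upper[OF UNIV_I bdd_in])
      also have "\<dots> \<le> (SUP z. SUP \<theta>. measure (P \<theta>) (ball z \<delta>))"
        by (rule cSUP_upper[OF UNIV_I bdd_out])
      also have "\<dots> < min \<alpha> 1" using hb d0 H by blast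
      finally show ?thesis .
    qed
    have small: "measure (P \<theta>) (ball (x 0) \<delta>) < \<alpha>" for \<theta> using bnd[of \<theta>] by simp
    have "ball (x 0) \<delta> \<noteq> UNIV"
    proof
      assume eq: "ball (x 0) \<delta> = UNIV"
      have "space (P undefined) = UNIV" using sets_eq_imp_space_eq[OF smP[of undefined]] by simp
      then have "measure (P undefined) (ball (x 0) \<delta>) = 1"
        using prob_space.prob_space[OF psP[of undefined]] eq by simp
      then show False using bnd[of undefined] by simp
    qed
    then obtain y where y: "y \<notin> ball (x 0) \<delta>" by blast
    have P_pos': "\<forall>\<mu>\<in>range P. \<forall>(x::'x) \<delta>. \<delta> > 0 \<longrightarrow> emeasure \<mu> (ball x \<delta>) > 0"
      using P_pos by blast
    note ps = post_step[where x=x and \<delta>=\<delta> and \<alpha>=\<alpha> and P=P and y=y and n=n, OF P_meas P_pos' prior Phi_meas small y n1 d0]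
    define \<pi>0 where "\<pi>0 = distr \<pi>\<Theta> (restrict_space MX (range P)) P"
    define Pa where "Pa = Pi_alpha (range P) \<pi>0 \<alpha>"
    have conv: "emeasure \<pi>0 {y \<in> space \<pi>0. Q y} = emeasure \<pi>\<Theta> {\<theta>. Q (P \<theta>)}"
      if "{\<mu> \<in> space MX. Q \<mu>} \<in> sets MX" for Q
      unfolding \<pi>0_def by (rule pi0_emeasure[OF P_meas prior that])
    have up: "ess_sup \<pi>0 \<Phi>0 \<le> upper_post \<Phi>0 Pa n x \<delta>"
    proof (rule ccontr)
      assume "\<not> ?thesis"
      then have "upper_post \<Phi>0 Pa n x \<delta> < ess_sup \<pi>0 \<Phi>0" by simp
      then obtain r where r1: "upper_post \<Phi>0 Pa n x \<delta> < ereal r" and r2: "ereal r < ess_sup \<pi>0 \<Phi>0"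
        using ereal_dense2 by blast
      have "emeasure \<pi>0 {y \<in> space \<pi>0. r < \<Phi>0 y} \<noteq> 0"
      proof
        assume "emeasure \<pi>0 {y \<in> space \<pi>0. r < \<Phi>0 y} = 0"
        then have "ess_sup \<pi>0 \<Phi>0 \<le> ereal r" unfolding ess_sup_def by (intro Inf_lower imageI) simp
        with r2 show False by simp
      qed
      moreover have "{\<mu> \<in> space MX. r < \<Phi>0 \<mu>} \<in> sets MX" using Phi_meas by measurable
      ultimately have "emeasure \<pi>\<Theta> {\<theta>. r < \<Phi>0 (P \<theta>)} \<noteq> 0" using conv[of "\<lambda>\<mu>. r < \<Phi>0 \<mu>"] by simp
      then have "ereal r \<le> upper_post \<Phi>0 Pa n x \<delta>" unfolding Pa_def \<pi>0_def by (rule ps(1))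
      with r1 show False by simp
    qed
    have lo: "lower_post \<Phi>0 Pa n x \<delta> \<le> ess_inf \<pi>0 \<Phi>0"
    proof (rule ccontr)
      assume "\<not> ?thesis"
      then have "ess_inf \<pi>0 \<Phi>0 < lower_post \<Phi>0 Pa n x \<delta>" by simp
      then obtain r where r1: "ereal r < lower_post \<Phi>0 Pa n x \<delta>" and r2: "ess_inf \<pi>0 \<Phi>0 < ereal r"
        using ereal_dense2 by blast
      have "emeasure \<pi>0 {y \<in> space \<pi>0. \<Phi>0 y < r} \<noteq> 0"
      proof
        assume "emeasure \<pi>0 {y \<in> space \<pi>0. \<Phi>0 y < r} = 0"
        then have "ereal r \<le> ess_inf \<pi>0 \<Phi>0" unfolding ess_inf_def by (intro Sup_upper imageI) simp
        with r2 show False by simp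
      qed
      moreover have "{\<mu> \<in> space MX. \<Phi>0 \<mu> < r} \<in> sets MX" using Phi_meas by measurable
      ultimately have "emeasure \<pi>\<Theta> {\<theta>. \<Phi>0 (P \<theta>) < r} \<noteq> 0" using conv[of "\<lambda>\<mu>. \<Phi>0 \<mu> < r"] by simp
      then have "lower_post \<Phi>0 Pa n x \<delta> \<le> ereal r" unfolding Pa_def \<pi>0_def by (rule ps(2))
      with r1 show False by simp
    qed
    show "let \<pi>0 = distr \<pi>\<Theta> (restrict_space MX (range P)) P;
                Pa = Pi_alpha (range P) \<pi>0 \<alpha>
            in upper_post \<Phi>0 Pa n x \<delta> \<ge> ess_sup \<pi>0 \<Phi>0 \<and>
               lower_post \<Phi>0 Pa n x \<delta> \<le> ess_inf \<pi>0 \<Phi>0"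
      unfolding Let_def using up lo unfolding Pa_def \<pi>0_def by simp
  qed
qed

end
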